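(* The $\mathrm{GL}_n$-geometric crystal structure on $\mathrm{GT}_n$ is given by $\bar\gamma(\mathbf{z})=\Big(z_{1,1},\frac{z_{1,2}z_{2,2}}{z_{1,1}},\dots,\frac{\prod_{i=1}^nz_{i,n}}{\prod_{i=1}^{n-1}z_{i,n-1}}\Big)$ (the $j$th entry being $\prod_{i=1}^jz_{i,j}/\prod_{i=1}^{j-1}z_{i,j-1}$), $\bar\varepsilon_j(\mathbf{z})=\frac{z_{1,j+1}}{z_{1,j}}\,\mathrm{gMax}_{1\le k\le j}\Big(\prod_{i=2}^k\phi_{i,j}^{-1}\Big)$, $\bar\varphi_j(\mathbf{z})=\frac{z_{j,j}}{z_{j+1,j+1}}\,\mathrm{gMax}_{1\le k\le j}\Big(\prod_{i=k+1}^j\phi_{i,j}\Big)$, and $\bar e_j^c(\mathbf{z})=\mathbf{z}'$ where $z'_{i,r}=z_{i,j}\frac{C_{i,j}}{C_{i+1,j}}$ if $r=j$ and $z'_{i,r}=z_{i,r}$ otherwise, with $C_{i,j}=\sum_{k=1}^jc^{\mathbb{1}_{k\ge i}}\prod_{\ell=2}^k\phi_{\ell,j}$.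
   Context: $\mathrm{GT}_n$ is the torus of arrays $\mathbf{z}=(z_{i,j})$, $z_{i,j}\in\mathbb{C}^*$, $1\le i\le j\le n$. $E_{a,b}$ is a matrix unit, $x_j(a)=I+aE_{j,j+1}$, $\Delta_I(A)$ is the minor of $A$ with rows $I$ and columns $[1,|I|]$ ($\Delta_\emptyset=1$). $W^i(y_i,\dots,y_n)=\sum_{k<i}E_{kk}+\sum_{k\ge i}y_kE_{kk}+\sum_{k=i}^{n-1}E_{k+1,k}$; $\Phi(\mathbf{z})=W^n(z_{n,n})W^{n-1}(z_{n-1,n-1},\frac{z_{n-1,n}}{z_{n-1,n-1}})\cdots W^1(z_{1,1},\frac{z_{1,2}}{z_{1,1}},\dots,\frac{z_{1,n}}{z_{1,n-1}})$; $\Psi(A)=(\Delta_{[i,j]}(A)/\Delta_{[i+1,j]}(A))_{1\le i\le j\le n}$. With $A=\Phi(\mathbf{z})$, the structure is $\bar\gamma(\mathbf{z})=(A_{1,1},\dots,A_{n,n})$, $\bar\varepsilon_j(\mathbf{z})=A_{j+1,j+1}/A_{j+1,j}$, $\bar\varphi_j(\mathbf{z})=A_{j,j}/A_{j+1,j}$, $\bar e_j^c(\mathbf{z})=\Psi\big(x_j((c-1)\bar\varphi_j(\mathbf{z}))\,A\,x_j((c^{-1}-1)\bar\varepsilon_j(\mathbf{z}))\big)$, for $j\in[n-1]$. The diamond ratio is $\phi_{i,j}=\frac{z_{i-1,j}z_{i,j}}{z_{i-1,j-1}z_{i,j+1}}$. $\mathrm{gMax}(f_1,\dots,f_k)=(f_1^{-1}+\dots+f_k^{-1})^{-1}$,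 and $\mathrm{gMax}(\emptyset)=1$; empty products equal $1$. *)

theory Defs
  imports Complex_Main "Jordan_Normal_Form.Determinant"
begin

text \<open>Arrays z are functions nat => nat => complex, indexed 1-based as z i j, 1 <= i <= j <= n.
  Matrices are n x n Jordan_Normal_Form matrices (0-based internally); Ent gives 1-based entries.\<close>

definition GT :: "nat \<Rightarrow> (nat \<Rightarrow> nat \<Rightarrow> complex) set" where
  "GT n = {z. \<forall>i j. 1 \<le> i \<and> i \<le> j \<and> j \<le> n \<longrightarrow> z i j \<noteq> 0}"

definition Ent :: "complex mat \<Rightarrow> nat \<Rightarrow> nat \<Rightarrow> complex" where
  "Ent A a b = A $$ (a - 1, b - 1)"

text \<open>W^i(y_i,...,y_n) with y given as a 1-based function.\<close>
definition Wmat :: "nat \<Rightarrow> nat \<Rightarrow> (nat \<Rightarrow> complex) \<Rightarrow> complex mat" where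
  "Wmat n i y = mat n n (\<lambda>(r, c).
     if r = c then (if Suc r < i then 1 else y (Suc r))
     else if r = Suc c \<and> i \<le> Suc c then 1 else 0)"

fun Phi_aux :: "nat \<Rightarrow> (nat \<Rightarrow> nat \<Rightarrow> complex) \<Rightarrow> nat \<Rightarrow> complex mat" where
  "Phi_aux n z 0 = 1\<^sub>m n"
| "Phi_aux n z (Suc m) =
     Wmat n (Suc m) (\<lambda>k. if k = Suc m then z (Suc m) (Suc m) else z (Suc m) k / z (Suc m) (k - 1))
     * Phi_aux n z m"

definition Phi :: "nat \<Rightarrow> (nat \<Rightarrow> nat \<Rightarrow> complex) \<Rightarrow> complex mat" where
  "Phi n z = Phi_aux n z n"

text \<open>Delta_{[i,j]}(A): rows i..j, columns 1..(j-i+1) (1-based); empty interval gives det of 0x0 = 1.\<close>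
definition minor :: "complex mat \<Rightarrow> nat \<Rightarrow> nat \<Rightarrow> complex" where
  "minor A i j = det (mat (Suc j - i) (Suc j - i) (\<lambda>(a, b). A $$ (i - 1 + a, b)))"

definition Psi :: "complex mat \<Rightarrow> nat \<Rightarrow> nat \<Rightarrow> complex" where
  "Psi A i j = minor A i j / minor A (Suc i) j"

definition xmat :: "nat \<Rightarrow> nat \<Rightarrow> complex \<Rightarrow> complex mat" where
  "xmat n j a = mat n n (\<lambda>(r, c). if r = c then 1 else if r = j - 1 \<and> c = j then a else 0)"

definition gammabar :: "nat \<Rightarrow> (nat \<Rightarrow> nat \<Rightarrow> complex) \<Rightarrow> nat \<Rightarrow> complex" where
  "gammabar n z k = Ent (Phi n z) k k"

definition epsbar :: "nat \<Rightarrow> (nat \<Rightarrow> nat \<Rightarrow> complex) \<Rightarrow> nat \<Rightarrow> complex" where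
  "epsbar n z j = Ent (Phi n z) (Suc j) (Suc j) / Ent (Phi n z) (Suc j) j"

definition phibar :: "nat \<Rightarrow> (nat \<Rightarrow> nat \<Rightarrow> complex) \<Rightarrow> nat \<Rightarrow> complex" where
  "phibar n z j = Ent (Phi n z) j j / Ent (Phi n z) (Suc j) j"

definition emat :: "nat \<Rightarrow> complex \<Rightarrow> nat \<Rightarrow> (nat \<Rightarrow> nat \<Rightarrow> complex) \<Rightarrow> complex mat" where
  "emat n c j z = xmat n j ((c - 1) * phibar n z j) * Phi n z * xmat n j ((inverse c - 1) * epsbar n z j)"

definition ebar :: "nat \<Rightarrow> complex \<Rightarrow> nat \<Rightarrow> (nat \<Rightarrow> nat \<Rightarrow> complex) \<Rightarrow> nat \<Rightarrow> nat \<Rightarrow> complex" where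
  "ebar n c j z = Psi (emat n c j z)"

definition diamond :: "(nat \<Rightarrow> nat \<Rightarrow> complex) \<Rightarrow> nat \<Rightarrow> nat \<Rightarrow> complex" where
  "diamond z i j = z (i - 1) j * z i j / (z (i - 1) (j - 1) * z i (Suc j))"

definition gMax :: "('a \<Rightarrow> complex) \<Rightarrow> 'a set \<Rightarrow> complex" where
  "gMax f K = (if K = {} then 1 else inverse (\<Sum>k\<in>K. inverse (f k)))"

definition Cc :: "complex \<Rightarrow> (nat \<Rightarrow> nat \<Rightarrow> complex) \<Rightarrow> nat \<Rightarrow> nat \<Rightarrow> complex" where
  "Cc c z i j = (\<Sum>k=1..j. (if i \<le> k then c else 1) * (\<Prod>l=2..k. diamond z l j))"

end

theory Submission
  imports Defs
begin

definition yv :: "(nat \<Rightarrow> nat \<Rightarrow> complex) \<Rightarrow> nat \<Rightarrow> nat \<Rightarrow> complex" where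
  "yv z m k = (if k = m then z m m else z m k / z m (k - 1))"

fun PP :: "nat \<Rightarrow> (nat \<Rightarrow> nat \<Rightarrow> complex) \<Rightarrow> nat \<Rightarrow> nat \<Rightarrow> complex mat" where
  "PP n z a 0 = 1\<^sub>m n"
| "PP n z a (Suc b) = (if a \<le> Suc b then Wmat n (Suc b) (yv z (Suc b)) * PP n z a b else 1\<^sub>m n)"

definition dg :: "(nat \<Rightarrow> nat \<Rightarrow> complex) \<Rightarrow> nat \<Rightarrow> nat \<Rightarrow> complex" where
  "dg z m k = (if Suc k < m then 1 else yv z m (Suc k))"

lemma W_carrier[simp]: "Wmat n m y \<in> carrier_mat n n"
  unfolding Wmat_def by simp

lemma PP_carrier[simp]: "PP n z a b \<in> carrier_mat n n"
proof (induction b)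
  case (Suc b)
  then show ?case using mult_carrier_mat[OF W_carrier Suc.IH] by simp
qed simp

lemma W_index: "r < n \<Longrightarrow> c < n \<Longrightarrow> Wmat n m y $$ (r, c) =
  (if r = c then (if Suc r < m then 1 else y (Suc r))
     else if r = Suc c \<and> m \<le> Suc c then 1 else 0)"
  unfolding Wmat_def by simp

lemma mult_index:
  assumes "A \<in> carrier_mat n n" "B \<in> carrier_mat n n" "i < n" "j < n"
  shows "(A * B) $$ (i, j) = (\<Sum>t<n. A $$ (i, t) * B $$ (t, j))"
  using assms by (simp add: scalar_prod_def atLeast0LessThan)

lemma W_mult_index:
  assumes P: "P \<in> carrier_mat n n" and r: "r < n" and c: "c < n"
  shows "(Wmat n m y * P) $$ (r, c) = (if Suc r < m then 1 else y (Suc r)) * P $$ (r, c)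
     + (if 0 < r \<and> m \<le> r then P $$ (r - 1, c) else 0)" (is "_ = ?rhs")
proof -
  have "(Wmat n m y * P) $$ (r, c) = (\<Sum>t<n. Wmat n m y $$ (r, t) * P $$ (t, c))"
    by (rule mult_index[OF W_carrier P r c])
  also have "\<dots> = (\<Sum>t<n. (if t = r then (if Suc r < m then 1 else y (Suc r)) * P $$ (r, c) else 0)
      + (if t = r - 1 \<and> 0 < r \<and> m \<le> r then P $$ (r - 1, c) else 0))"
    by (rule sum.cong, simp, auto simp: W_index r)
  also have "\<dots> = ?rhs"
  proof (cases "0 < r \<and> m \<le> r")
    case True
    then show ?thesis using r by (simp add: sum.distrib)
  next
    case False
    then have "\<And>t. \<not> (t = r - 1 \<and> 0 < r \<and> m \<le> r)" by auto
    then have "(\<Sum>t<n. (if t = r - 1 \<and> 0 < r \<and> m \<le> r then P $$ (r - 1, c) else 0)) = 0"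
      by (intro sum.neutral) auto
    then show ?thesis using r False by (simp only: sum.distrib) simp
  qed
  finally show ?thesis .
qed
lemma W_mult_right_index:
  assumes B: "B \<in> carrier_mat n n" and r: "r < n" and c: "c < n"
  shows "(B * Wmat n m y) $$ (r, c) = B $$ (r, c) * (if Suc c < m then 1 else y (Suc c))
     + (if Suc c < n \<and> m \<le> Suc c then B $$ (r, Suc c) else 0)" (is "_ = ?rhs")
proof -
  have "(B * Wmat n m y) $$ (r, c) = (\<Sum>t<n. B $$ (r, t) * Wmat n m y $$ (t, c))"
    by (rule mult_index[OF B W_carrier r c])
  also have "\<dots> = (\<Sum>t<n. (if t = c then B $$ (r, c) * (if Suc c < m then 1 else y (Suc c)) else 0)
      + (if t = Suc c \<and> m \<le> Suc c then B $$ (r, Suc c) else 0))"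
    by (rule sum.cong, simp, auto simp: W_index c)
  also have "\<dots> = ?rhs"
  proof (cases "m \<le> Suc c \<and> Suc c < n")
    case True
    then show ?thesis using c by (simp add: sum.distrib)
  next
    case False
    then have "(\<Sum>t<n. (if t = Suc c \<and> m \<le> Suc c then B $$ (r, Suc c) else 0)) = 0"
      by (intro sum.neutral) auto
    then show ?thesis using c False by (simp only: sum.distrib) auto
  qed
  finally show ?thesis .
qed

lemma x_carrier[simp]: "xmat n j a \<in> carrier_mat n n"
  unfolding xmat_def by simp

lemma x_index: "r < n \<Longrightarrow> c < n \<Longrightarrow> xmat n j a $$ (r, c) =
  (if r = c then 1 else if r = j - 1 \<and> c = j then a else 0)"
  unfolding xmat_def by simp

lemma x_right_index:
  assumes M: "M \<in> carrier_mat n n" and r: "r < n" and c: "c < n"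
  shows "(M * xmat n j b) $$ (r, c) = M $$ (r, c) + (if c = j \<and> 0 < j then b * M $$ (r, j - 1) else 0)"
    (is "_ = ?rhs")
proof -
  have "(M * xmat n j b) $$ (r, c) = (\<Sum>t<n. M $$ (r, t) * xmat n j b $$ (t, c))"
    by (rule mult_index[OF M x_carrier r c])
  also have "\<dots> = (\<Sum>t<n. (if t = c then M $$ (r, c) else 0)
      + (if t = j - 1 \<and> c = j \<and> 0 < j then b * M $$ (r, j - 1) else 0))"
    by (rule sum.cong, simp, auto simp: x_index c)
  also have "\<dots> = ?rhs"
  proof (cases "c = j \<and> 0 < j")
    case True
    then show ?thesis using c by (simp add: sum.distrib)
  next
    case False
    then have "(\<Sum>t<n. (if t = j - 1 \<and> c = j \<and> 0 < j then b * M $$ (r, j - 1) else 0)) = 0"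
      by (intro sum.neutral) auto
    then show ?thesis using c False by (simp only: sum.distrib) auto
  qed
  finally show ?thesis .
qed

lemma x_left_index:
  assumes M: "M \<in> carrier_mat n n" and r: "r < n" and c: "c < n"
  shows "(xmat n j a * M) $$ (r, c) = M $$ (r, c) + (if r = j - 1 \<and> 0 < j \<and> j < n then a * M $$ (j, c) else 0)"
    (is "_ = ?rhs")
proof -
  have "(xmat n j a * M) $$ (r, c) = (\<Sum>t<n. xmat n j a $$ (r, t) * M $$ (t, c))"
    by (rule mult_index[OF x_carrier M r c])
  also have "\<dots> = (\<Sum>t<n. (if t = r then M $$ (r, c) else 0)
      + (if t = j \<and> r = j - 1 \<and> 0 < j then a * M $$ (j, c) else 0))"
    by (rule sum.cong, simp, auto simp: x_index r)
  also have "\<dots> = ?rhs"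
  proof (cases "r = j - 1 \<and> 0 < j \<and> j < n")
    case True
    then show ?thesis using r by (simp add: sum.distrib)
  next
    case False
    then have "(\<Sum>t<n. (if t = j \<and> r = j - 1 \<and> 0 < j then a * M $$ (j, c) else 0)) = 0"
      by (intro sum.neutral) auto
    then show ?thesis using r False by (simp only: sum.distrib) auto
  qed
  finally show ?thesis .
qed

lemma yv_eq: "yv z m = (\<lambda>k. if k = m then z m m else z m k / z m (k - 1))"
  by (simp add: fun_eq_iff yv_def)

lemma Phi_aux_PP: "Phi_aux n z m = PP n z 1 m"
  by (induction m) (simp_all add: yv_eq)

lemma PP_empty: "b < a \<Longrightarrow> PP n z a b = 1\<^sub>m n"
  by (induction b) auto

lemma PP_split: "1 \<le> a \<Longrightarrow> a \<le> b \<Longrightarrow>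
   PP n z a b = PP n z (Suc a) b * Wmat n a (yv z a)"
proof (induction b)
  case 0
  then show ?case by simp
next
  case (Suc b)
  show ?case
  proof (cases "a = Suc b")
    case True
    then show ?thesis by (simp add: PP_empty right_mult_one_mat[OF W_carrier] left_mult_one_mat[OF W_carrier])
  next
    case False
    then have ab: "a \<le> b" using Suc.prems by simp
    have "PP n z a (Suc b) = Wmat n (Suc b) (yv z (Suc b)) * (PP n z (Suc a) b * Wmat n a (yv z a))"
      using Suc ab by simp
    also have "\<dots> = (Wmat n (Suc b) (yv z (Suc b)) * PP n z (Suc a) b) * Wmat n a (yv z a)"
      by (rule assoc_mult_mat[symmetric, of _ n n _ n _ n]) auto
    also have "\<dots> = PP n z (Suc a) (Suc b) * Wmat n a (yv z a)"
      using ab by simp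
    finally show ?thesis .
  qed
qed

lemma PP_lower: "r < c \<Longrightarrow> c < n \<Longrightarrow> PP n z a b $$ (r, c) = 0"
proof (induction b arbitrary: r)
  case (Suc b)
  then show ?case by (auto simp: W_mult_index)
qed simp

lemma PP_idcol: "Suc c < a \<Longrightarrow> r < n \<Longrightarrow> c < n \<Longrightarrow>
   PP n z a b $$ (r, c) = (if r = c then 1 else 0)"
proof (induction b arbitrary: r)
  case (Suc b)
  then show ?case by (auto simp: W_mult_index)
qed simp

lemma PP_diag: "1 \<le> a \<Longrightarrow> k < n \<Longrightarrow> PP n z a b $$ (k, k) = (\<Prod>m\<in>{a..b}. dg z m k)"
proof (induction b)
  case (Suc b)
  show ?case
  proof (cases "a \<le> Suc b")
    case True
    then have "{a..Suc b} = insert (Suc b) {a..b}" by auto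
    then show ?thesis using Suc True by (simp add: W_mult_index PP_lower dg_def)
  next
    case False
    then show ?thesis using Suc.prems by simp
  qed
qed simp

lemma PP_sub: "1 \<le> a \<Longrightarrow> Suc k < n \<Longrightarrow> PP n z a b $$ (Suc k, k) =
  (\<Sum>m\<in>{a..b}. if m \<le> Suc k then (\<Prod>m'\<in>{Suc m..b}. dg z m' (Suc k)) * (\<Prod>m'\<in>{a..<m}. dg z m' k) else 0)"
proof (induction b)
  case (Suc b)
  show ?case
  proof (cases "a \<le> Suc b")
    case True
    have ins: "{a..Suc b} = insert (Suc b) {a..b}" using True by auto
    have L: "PP n z a (Suc b) $$ (Suc k, k) = dg z (Suc b) (Suc k) * PP n z a b $$ (Suc k, k)
       + (if Suc b \<le> Suc k then PP n z a b $$ (k, k) else 0)"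
      using True Suc.prems by (simp add: W_mult_index dg_def)
    have S: "(\<Sum>m\<in>{a..b}. if m \<le> Suc k then (\<Prod>m'\<in>{Suc m..Suc b}. dg z m' (Suc k)) * (\<Prod>m'\<in>{a..<m}. dg z m' k) else 0)
       = dg z (Suc b) (Suc k) * (\<Sum>m\<in>{a..b}. if m \<le> Suc k then (\<Prod>m'\<in>{Suc m..b}. dg z m' (Suc k)) * (\<Prod>m'\<in>{a..<m}. dg z m' k) else 0)"
      unfolding sum_distrib_left
    proof (rule sum.cong)
      fix m assume "m \<in> {a..b}"
      then have "{Suc m..Suc b} = insert (Suc b) {Suc m..b}" by auto
      then show "(if m \<le> Suc k then (\<Prod>m'\<in>{Suc m..Suc b}. dg z m' (Suc k)) * (\<Prod>m'\<in>{a..<m}. dg z m' k) else 0)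
        = dg z (Suc b) (Suc k) * (if m \<le> Suc k then (\<Prod>m'\<in>{Suc m..b}. dg z m' (Suc k)) * (\<Prod>m'\<in>{a..<m}. dg z m' k) else 0)"
        by simp
    qed simp
    have D: "(\<Prod>m'\<in>{a..<Suc b}. dg z m' k) = PP n z a b $$ (k, k)"
      using Suc.prems by (simp add: PP_diag atLeastLessThanSuc_atLeastAtMost)
    show ?thesis
      unfolding L ins using S D Suc.IH Suc.prems by (simp add: add.commute)
  next
    case False
    then show ?thesis using Suc.prems by simp
  qed
qed simp

definition gm :: "complex mat \<Rightarrow> (nat \<Rightarrow> nat) \<Rightarrow> nat \<Rightarrow> nat \<Rightarrow> complex" where
  "gm A \<rho> p s = det (mat s s (\<lambda>(a, b). A $$ (\<rho> a, p + b)))"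

lemma minor_gm: "minor A i j = gm A (\<lambda>a. i - 1 + a) 0 (Suc j - i)"
  by (simp add: minor_def gm_def)

lemma det_lower_prod:
  assumes "A \<in> carrier_mat s s" "\<And>i j. i < j \<Longrightarrow> j < s \<Longrightarrow> A $$ (i, j) = 0"
  shows "det A = (\<Prod>i<s. A $$ (i, i))"
proof -
  have "det A = prod_list (diag_mat A)" by (rule det_lower_triangular[OF assms(2) assms(1)])
  also have "\<dots> = (\<Prod>i<s. A $$ (i, i))"
    using assms(1) by (simp add: diag_mat_def prod.list_conv_set_nth atLeast0LessThan)
  finally show ?thesis .
qed

lemma det_upper_one:
  assumes "T \<in> carrier_mat s s" "\<And>i j. j < i \<Longrightarrow> i < s \<Longrightarrow> T $$ (i, j) = 0"
    "\<And>i. i < s \<Longrightarrow> T $$ (i, i) = 1"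
  shows "det T = 1"
proof -
  have "upper_triangular T" using assms unfolding upper_triangular_def by auto
  then have "det T = prod_list (diag_mat T)" by (rule det_upper_triangular[OF _ assms(1)])
  also have "\<dots> = 1"
    using assms by (simp add: diag_mat_def prod.list_conv_set_nth atLeast0LessThan)
  finally show ?thesis .
qed

lemma gm_W:
  assumes B: "B \<in> carrier_mat n n" and ps: "p + s < n"
    and rows: "\<And>a. a < s \<Longrightarrow> \<rho> a < n \<and> B $$ (\<rho> a, p) = 0"
  shows "gm (B * Wmat n (Suc p) y) \<rho> p s = gm B \<rho> (Suc p) s"
proof -
  define T where "T = mat s s (\<lambda>(a, b). if a = b then 1 else if Suc a = b then y (Suc (p + b)) else (0::complex))"
  define S where "S = mat s s (\<lambda>(a, b). B $$ (\<rho> a, Suc p + b))"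
  have TC: "T \<in> carrier_mat s s" and SC: "S \<in> carrier_mat s s" unfolding T_def S_def by auto
  have eq: "mat s s (\<lambda>(a, b). (B * Wmat n (Suc p) y) $$ (\<rho> a, p + b)) = S * T"
  proof (rule eq_matI)
    fix a b assume a: "a < dim_row (S * T)" and b: "b < dim_col (S * T)"
    then have a: "a < s" and b: "b < s" using SC TC by auto
    have L: "(B * Wmat n (Suc p) y) $$ (\<rho> a, p + b) = B $$ (\<rho> a, p + b) * y (Suc (p + b)) + B $$ (\<rho> a, Suc (p + b))"
      using W_mult_right_index[OF B, of "\<rho> a" "p + b" "Suc p" y] rows[OF a] a b ps by simp
    have "(S * T) $$ (a, b) = (\<Sum>t<s. S $$ (a, t) * T $$ (t, b))"
      by (rule mult_index[OF SC TC a b])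
    also have "\<dots> = (\<Sum>t<s. (if t = b then B $$ (\<rho> a, Suc p + b) else 0)
       + (if Suc t = b then B $$ (\<rho> a, p + b) * y (Suc (p + b)) else 0))"
      by (rule sum.cong, simp) (auto simp: S_def T_def a b)
    also have "\<dots> = B $$ (\<rho> a, Suc p + b) + (if 0 < b then B $$ (\<rho> a, p + b) * y (Suc (p + b)) else 0)"
    proof (cases "0 < b")
      case True
      have "(\<Sum>t<s. (if Suc t = b then B $$ (\<rho> a, p + b) * y (Suc (p + b)) else 0))
        = (\<Sum>t<s. (if t = b - 1 then B $$ (\<rho> a, p + b) * y (Suc (p + b)) else 0))"
        using True by (intro sum.cong) auto
      then show ?thesis using True b by (simp add: sum.distrib)
    next
      case False
      then have "(\<Sum>t<s. (if Suc t = b then B $$ (\<rho> a, p + b) * y (Suc (p + b)) else 0)) = 0"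
        by (intro sum.neutral) auto
      then show ?thesis using b False by (simp only: sum.distrib) auto
    qed
    finally show "mat s s (\<lambda>(a, b). (B * Wmat n (Suc p) y) $$ (\<rho> a, p + b)) $$ (a, b) = (S * T) $$ (a, b)"
      using L a b rows[OF a] by auto
  qed (use SC TC in auto)
  have "det T = 1"
    by (rule det_upper_one[OF TC]) (auto simp: T_def)
  then show ?thesis
    unfolding gm_def eq det_mult[OF SC TC] by (simp add: S_def)
qed

lemma gm_PP_iter:
  assumes "p + d + s \<le> n" "\<And>a. a < s \<Longrightarrow> \<rho> a < n \<and> p + d \<le> \<rho> a"
  shows "gm (PP n z (Suc p) n) \<rho> p s = gm (PP n z (Suc (p + d)) n) \<rho> (p + d) s"
  using assms
proof (induction d)
  case 0
  then show ?case by simp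
next
  case (Suc d)
  have IH: "gm (PP n z (Suc p) n) \<rho> p s = gm (PP n z (Suc (p + d)) n) \<rho> (p + d) s"
    using Suc.prems by (intro Suc.IH) (auto dest: Suc_leD)
  have split: "PP n z (Suc (p + d)) n = PP n z (Suc (Suc (p + d))) n * Wmat n (Suc (p + d)) (yv z (Suc (p + d)))"
    using Suc.prems(1) by (intro PP_split) auto
  have "gm (PP n z (Suc (Suc (p + d))) n * Wmat n (Suc (p + d)) (yv z (Suc (p + d)))) \<rho> (p + d) s
      = gm (PP n z (Suc (Suc (p + d))) n) \<rho> (Suc (p + d)) s"
  proof (rule gm_W)
    show "p + d + s < n" using Suc.prems(1) by simp
    fix a assume a: "a < s"
    then show "\<rho> a < n \<and> PP n z (Suc (Suc (p + d))) n $$ (\<rho> a, p + d) = 0"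
      using Suc.prems(2)[OF a] Suc.prems(1) by (simp add: PP_idcol)
  qed simp
  then show ?case using IH split by simp
qed

lemma gm_tri:
  assumes Q: "Q \<in> carrier_mat n n" and low: "\<And>r c. r < c \<Longrightarrow> c < n \<Longrightarrow> Q $$ (r, c) = 0"
    and rho: "\<And>a b. a < b \<Longrightarrow> b < s \<Longrightarrow> \<rho> a < p + b" and ps: "p + s \<le> n"
  shows "gm Q \<rho> p s = (\<Prod>a<s. Q $$ (\<rho> a, p + a))"
  unfolding gm_def
  by (subst det_lower_prod[of _ s]) (use rho ps in \<open>auto intro!: low\<close>)

lemma minor_PP:
  assumes "1 \<le> i" "i \<le> r" "r \<le> n"
  shows "minor (PP n z 1 n) i r = (\<Prod>a<Suc r - i. PP n z i n $$ (i - 1 + a, i - 1 + a))"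
proof -
  have "minor (PP n z 1 n) i r = gm (PP n z (Suc 0) n) (\<lambda>a. i - 1 + a) 0 (Suc r - i)"
    by (simp add: minor_gm)
  also have "\<dots> = gm (PP n z (Suc (0 + (i - 1))) n) (\<lambda>a. i - 1 + a) (0 + (i - 1)) (Suc r - i)"
    by (rule gm_PP_iter) (use assms in auto)
  also have "\<dots> = (\<Prod>a<Suc r - i. PP n z i n $$ (i - 1 + a, i - 1 + a))"
    using assms by (subst gm_tri[of _ n]) (auto intro: PP_lower)
  finally show ?thesis .
qed

lemma minor2_PP:
  assumes "1 \<le> i" "i \<le> j" "j < n"
  shows "gm (PP n z 1 n) (\<lambda>a. if a < j - i then i - 1 + a else j) 0 (Suc j - i)
     = (\<Prod>a<j - i. PP n z i n $$ (i - 1 + a, i - 1 + a)) * PP n z i n $$ (j, j - 1)"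
proof -
  let ?r = "\<lambda>a. if a < j - i then i - 1 + a else j"
  have "gm (PP n z (Suc 0) n) ?r 0 (Suc j - i) = gm (PP n z (Suc (0 + (i - 1))) n) ?r (0 + (i - 1)) (Suc j - i)"
    by (rule gm_PP_iter) (use assms in auto)
  also have "\<dots> = (\<Prod>a<Suc (j - i). PP n z i n $$ (?r a, i - 1 + a))"
    using assms by (subst gm_tri[of _ n]) (auto intro: PP_lower simp: Suc_diff_le)
  also have "\<dots> = (\<Prod>a<j - i. PP n z i n $$ (i - 1 + a, i - 1 + a)) * PP n z i n $$ (j, j - 1)"
    using assms by (simp add: lessThan_Suc mult.commute)
  finally show ?thesis using assms by (simp add: Suc_diff_le)
qed

lemma gm_xright:
  assumes M: "M \<in> carrier_mat n n" and sn: "s \<le> n" and rows: "\<And>a. a < s \<Longrightarrow> \<rho> a < n"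
  shows "gm (M * xmat n j b) \<rho> 0 s = gm M \<rho> 0 s"
proof -
  define T where "T = mat s s (\<lambda>(t, c). if t = c then 1 else if t = j - 1 \<and> c = j then b else (0::complex))"
  define S where "S = mat s s (\<lambda>(a, c). M $$ (\<rho> a, c))"
  have TC: "T \<in> carrier_mat s s" and SC: "S \<in> carrier_mat s s" unfolding T_def S_def by auto
  have eq: "mat s s (\<lambda>(a, c). (M * xmat n j b) $$ (\<rho> a, 0 + c)) = S * T"
  proof (rule eq_matI)
    fix a c assume a: "a < dim_row (S * T)" and c: "c < dim_col (S * T)"
    then have a: "a < s" and c: "c < s" using SC TC by auto
    have L: "(M * xmat n j b) $$ (\<rho> a, c) = M $$ (\<rho> a, c) + (if c = j \<and> 0 < j then b * M $$ (\<rho> a, j - 1) else 0)"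
      using x_right_index[OF M, of "\<rho> a" c j b] rows[OF a] c sn by simp
    have "(S * T) $$ (a, c) = (\<Sum>t<s. S $$ (a, t) * T $$ (t, c))"
      by (rule mult_index[OF SC TC a c])
    also have "\<dots> = (\<Sum>t<s. (if t = c then M $$ (\<rho> a, c) else 0)
       + (if t = j - 1 then (if c = j \<and> 0 < j then b * M $$ (\<rho> a, j - 1) else 0) else 0))"
      by (rule sum.cong, simp) (auto simp: S_def T_def a c)
    also have "\<dots> = M $$ (\<rho> a, c) + (if c = j \<and> 0 < j then b * M $$ (\<rho> a, j - 1) else 0)"
    proof (cases "c = j \<and> 0 < j")
      case True
      then show ?thesis using c by (simp add: sum.distrib)
    next
      case False
      then show ?thesis using c by (simp only: sum.distrib) auto
    qed
    finally show "mat s s (\<lambda>(a, c). (M * xmat n j b) $$ (\<rho> a, 0 + c)) $$ (a, c) = (S * T) $$ (a, c)"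
      using L a c by auto
  qed (use SC TC in auto)
  have "det T = 1"
    by (rule det_upper_one[OF TC]) (auto simp: T_def)
  then show ?thesis
    unfolding gm_def eq det_mult[OF SC TC] by (simp add: S_def)
qed

lemma det_row_linear_last:
  assumes C: "S0 \<in> carrier_mat (Suc m) (Suc m)" "S1 \<in> carrier_mat (Suc m) (Suc m)" "S2 \<in> carrier_mat (Suc m) (Suc m)"
    and same: "\<And>i c. i < m \<Longrightarrow> c < Suc m \<Longrightarrow> S1 $$ (i, c) = S0 $$ (i, c) \<and> S2 $$ (i, c) = S0 $$ (i, c)"
    and last: "\<And>c. c < Suc m \<Longrightarrow> S1 $$ (m, c) = S0 $$ (m, c) + a * S2 $$ (m, c)"
  shows "det S1 = det S0 + a * det S2"
proof -
  have del1: "mat_delete S1 m c = mat_delete S0 m c" and del2: "mat_delete S2 m c = mat_delete S0 m c" for c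
    using C same unfolding mat_delete_def by (auto intro!: eq_matI)
  have cof: "cofactor S1 m c = cofactor S0 m c" "cofactor S2 m c = cofactor S0 m c" for c
    unfolding cofactor_def del1 del2 by auto
  have "det S1 = (\<Sum>c<Suc m. S1 $$ (m, c) * cofactor S1 m c)"
    by (rule laplace_expansion_row[OF C(2)]) simp
  also have "\<dots> = (\<Sum>c<Suc m. S0 $$ (m, c) * cofactor S0 m c) + a * (\<Sum>c<Suc m. S2 $$ (m, c) * cofactor S2 m c)"
    by (simp add: last cof sum.distrib sum_distrib_left algebra_simps)
  also have "\<dots> = det S0 + a * det S2"
    using laplace_expansion_row[OF C(1), of m] laplace_expansion_row[OF C(3), of m] by simp
  finally show ?thesis .
qed

lemma minor_xleft_eq:
  assumes A: "A \<in> carrier_mat n n" and "1 \<le> i" "r \<le> n" "r < j \<or> j < i"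
  shows "minor (xmat n j a * A) i r = minor A i r"
  unfolding minor_def
proof (rule arg_cong[where f = det], rule eq_matI)
  fix t c assume t: "t < dim_row (mat (Suc r - i) (Suc r - i) (\<lambda>(aa, b). A $$ (i - 1 + aa, b)))"
    and c: "c < dim_col (mat (Suc r - i) (Suc r - i) (\<lambda>(aa, b). A $$ (i - 1 + aa, b)))"
  then have t: "t < Suc r - i" and c: "c < Suc r - i" by auto
  have "i - 1 + t < n" "c < n" using t c assms by auto
  then show "mat (Suc r - i) (Suc r - i) (\<lambda>(aa, b). (xmat n j a * A) $$ (i - 1 + aa, b)) $$ (t, c) =
         mat (Suc r - i) (Suc r - i) (\<lambda>(aa, b). A $$ (i - 1 + aa, b)) $$ (t, c)"
    using t c assms by (auto simp: x_left_index[OF A])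
qed auto

lemma minor_xleft_both:
  assumes A: "A \<in> carrier_mat n n" and "1 \<le> i" "i \<le> j" "j < r" "r \<le> n"
  shows "minor (xmat n j a * A) i r = minor A i r"
proof -
  let ?s = "Suc r - i"
  define T where "T = mat ?s ?s (\<lambda>(t, u). if t = u then 1 else if t = j - i \<and> u = Suc (j - i) then a else (0::complex))"
  define S where "S = mat ?s ?s (\<lambda>(t, c). A $$ (i - 1 + t, c))"
  have TC: "T \<in> carrier_mat ?s ?s" and SC: "S \<in> carrier_mat ?s ?s" unfolding T_def S_def by auto
  have eq: "mat ?s ?s (\<lambda>(t, c). (xmat n j a * A) $$ (i - 1 + t, c)) = T * S"
  proof (rule eq_matI)
    fix t c assume t: "t < dim_row (T * S)" and c: "c < dim_col (T * S)"
    then have t: "t < ?s" and c: "c < ?s" using SC TC by auto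
    have tn: "i - 1 + t < n" "c < n" using t c assms by auto
    have L: "(xmat n j a * A) $$ (i - 1 + t, c) = A $$ (i - 1 + t, c) + (if t = j - i then a * A $$ (j, c) else 0)"
      using x_left_index[OF A tn, of j a] assms by auto
    have "(T * S) $$ (t, c) = (\<Sum>u<?s. T $$ (t, u) * S $$ (u, c))"
      by (rule mult_index[OF TC SC t c])
    also have "\<dots> = (\<Sum>u<?s. (if u = t then A $$ (i - 1 + t, c) else 0)
       + (if u = Suc (j - i) then (if t = j - i then a * A $$ (j, c) else 0) else 0))"
      by (rule sum.cong, simp) (use assms in \<open>auto simp: S_def T_def t c\<close>)
    also have "\<dots> = A $$ (i - 1 + t, c) + (if t = j - i then a * A $$ (j, c) else 0)"
      using t assms by (simp add: sum.distrib)
    finally show "mat ?s ?s (\<lambda>(t, c). (xmat n j a * A) $$ (i - 1 + t, c)) $$ (t, c) = (T * S) $$ (t, c)"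
      using L t c by auto
  qed (use SC TC in auto)
  have "det T = 1"
    by (rule det_upper_one[OF TC]) (auto simp: T_def)
  then show ?thesis
    unfolding minor_def eq det_mult[OF TC SC] by (simp add: S_def)
qed

lemma minor_xleft_last:
  assumes A: "A \<in> carrier_mat n n" and "1 \<le> i" "i \<le> j" "j < n"
  shows "minor (xmat n j a * A) i j = minor A i j
     + a * gm A (\<lambda>t. if t < j - i then i - 1 + t else j) 0 (Suc j - i)"
proof -
  let ?m = "j - i"
  have s: "Suc j - i = Suc ?m" using assms by auto
  show ?thesis
    unfolding minor_def gm_def s
  proof (rule det_row_linear_last)
    fix t c assume "t < ?m" "c < Suc ?m"
    then show "mat (Suc ?m) (Suc ?m) (\<lambda>(aa, b). (xmat n j a * A) $$ (i - 1 + aa, b)) $$ (t, c) =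
         mat (Suc ?m) (Suc ?m) (\<lambda>(aa, b). A $$ (i - 1 + aa, b)) $$ (t, c) \<and>
         mat (Suc ?m) (Suc ?m) (\<lambda>(aa, b). A $$ (if aa < j - i then i - 1 + aa else j, 0 + b)) $$ (t, c) =
         mat (Suc ?m) (Suc ?m) (\<lambda>(aa, b). A $$ (i - 1 + aa, b)) $$ (t, c)"
      using assms by (auto simp: x_left_index[OF A])
  next
    fix c assume "c < Suc ?m"
    then show "mat (Suc ?m) (Suc ?m) (\<lambda>(aa, b). (xmat n j a * A) $$ (i - 1 + aa, b)) $$ (?m, c) =
         mat (Suc ?m) (Suc ?m) (\<lambda>(aa, b). A $$ (i - 1 + aa, b)) $$ (?m, c) +
         a * mat (Suc ?m) (Suc ?m) (\<lambda>(aa, b). A $$ (if aa < j - i then i - 1 + aa else j, 0 + b)) $$ (?m, c)"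
      using assms by (auto simp: x_left_index[OF A])
  qed auto
qed

definition G :: "(nat \<Rightarrow> nat \<Rightarrow> complex) \<Rightarrow> nat \<Rightarrow> nat \<Rightarrow> nat \<Rightarrow> complex" where
  "G z a b k = (\<Prod>m\<in>{a..<b}. z m k)"

lemma G_nz: "z \<in> GT n \<Longrightarrow> 1 \<le> a \<Longrightarrow> b \<le> Suc k \<Longrightarrow> k \<le> n \<Longrightarrow> G z a b k \<noteq> 0"
  unfolding G_def GT_def by (auto simp: prod_zero_iff)

lemma G_split: "a \<le> b \<Longrightarrow> b \<le> c \<Longrightarrow> G z a b k * G z b c k = G z a c k"
  unfolding G_def by (rule prod.atLeastLessThan_concat)

lemma G_empty[simp]: "G z a a k = 1"
  unfolding G_def by simp

lemma G_first: "a < b \<Longrightarrow> G z a b k = z a k * G z (Suc a) b k"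
  unfolding G_def by (simp add: prod.atLeast_Suc_lessThan)

lemma G_last: "a \<le> b \<Longrightarrow> G z a (Suc b) k = G z a b k * z b k"
  unfolding G_def by (simp add: prod.atLeastLessThan_Suc)

lemma prod_yv: "i \<le> k \<Longrightarrow> (\<Prod>m\<in>{i..k}. yv z m k) = G z i (Suc k) k / G z i k (k - 1)"
proof -
  assume ik: "i \<le> k"
  have "{i..k} = insert k {i..<k}" using ik by auto
  then have "(\<Prod>m\<in>{i..k}. yv z m k) = z k k * (\<Prod>m\<in>{i..<k}. z m k / z m (k - 1))"
    by (simp add: yv_def)
  also have "\<dots> = G z i (Suc k) k / G z i k (k - 1)"
    using ik by (simp add: prod_dividef G_def prod.atLeastLessThan_Suc mult.commute)
  finally show ?thesis .
qed

lemma diag_PP: "1 \<le> i \<Longrightarrow> i \<le> k \<Longrightarrow> k \<le> n \<Longrightarrow>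
   PP n z i n $$ (k - 1, k - 1) = G z i (Suc k) k / G z i k (k - 1)"
proof -
  assume a: "1 \<le> i" "i \<le> k" "k \<le> n"
  have "PP n z i n $$ (k - 1, k - 1) = (\<Prod>m\<in>{i..n}. dg z m (k - 1))"
    using a by (intro PP_diag) auto
  also have "\<dots> = (\<Prod>m\<in>{i..k}. dg z m (k - 1))"
    by (rule prod.mono_neutral_right) (use a in \<open>auto simp: dg_def\<close>)
  also have "\<dots> = (\<Prod>m\<in>{i..k}. yv z m k)"
    by (rule prod.cong) (use a in \<open>auto simp: dg_def\<close>)
  also have "\<dots> = G z i (Suc k) k / G z i k (k - 1)" by (rule prod_yv[OF a(2)])
  finally show ?thesis .
qed

lemma sub_PP: "1 \<le> a \<Longrightarrow> 1 \<le> j \<Longrightarrow> j < n \<Longrightarrow>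
   PP n z a n $$ (j, j - 1) = (\<Sum>m\<in>{a..j}. G z (Suc m) (Suc (Suc j)) (Suc j) / G z (Suc m) (Suc j) j
       * (G z a m j / G z a m (j - 1)))"
proof -
  assume as: "1 \<le> a" "1 \<le> j" "j < n"
  have "PP n z a n $$ (Suc (j - 1), j - 1) = (\<Sum>m\<in>{a..n}. if m \<le> Suc (j - 1) then
      (\<Prod>m'\<in>{Suc m..n}. dg z m' (Suc (j - 1))) * (\<Prod>m'\<in>{a..<m}. dg z m' (j - 1)) else 0)"
    using as by (intro PP_sub) auto
  moreover have jj: "Suc (j - 1) = j" using as by simp
  ultimately have "PP n z a n $$ (j, j - 1) = (\<Sum>m\<in>{a..n}. if m \<le> j then
      (\<Prod>m'\<in>{Suc m..n}. dg z m' j) * (\<Prod>m'\<in>{a..<m}. dg z m' (j - 1)) else 0)"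
    by (simp only: jj)
  also have "\<dots> = (\<Sum>m\<in>{a..j}. if m \<le> j then
      (\<Prod>m'\<in>{Suc m..n}. dg z m' j) * (\<Prod>m'\<in>{a..<m}. dg z m' (j - 1)) else 0)"
    by (rule sum.mono_neutral_right) (use as in auto)
  also have "\<dots> = (\<Sum>m\<in>{a..j}. G z (Suc m) (Suc (Suc j)) (Suc j) / G z (Suc m) (Suc j) j
       * (G z a m j / G z a m (j - 1)))"
  proof (rule sum.cong)
    fix m assume m: "m \<in> {a..j}"
    have "(\<Prod>m'\<in>{Suc m..n}. dg z m' j) = (\<Prod>m'\<in>{Suc m..Suc j}. dg z m' j)"
      by (rule prod.mono_neutral_right) (use as m in \<open>auto simp: dg_def\<close>)
    also have "\<dots> = (\<Prod>m'\<in>{Suc m..Suc j}. yv z m' (Suc j))"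
      by (rule prod.cong) (use as m in \<open>auto simp: dg_def\<close>)
    finally have p1: "(\<Prod>m'\<in>{Suc m..n}. dg z m' j) = (\<Prod>m'\<in>{Suc m..Suc j}. yv z m' (Suc j))" .
    have p2: "(\<Prod>m'\<in>{a..<m}. dg z m' (j - 1)) = (\<Prod>m'\<in>{a..<m}. z m' j / z m' (j - 1))"
      by (rule prod.cong) (use as m in \<open>auto simp: dg_def yv_def\<close>)
    show "(if m \<le> j then (\<Prod>m'\<in>{Suc m..n}. dg z m' j) * (\<Prod>m'\<in>{a..<m}. dg z m' (j - 1)) else 0) =
        G z (Suc m) (Suc (Suc j)) (Suc j) / G z (Suc m) (Suc j) j * (G z a m j / G z a m (j - 1))"
      using m p1 p2 prod_yv[of "Suc m" "Suc j" z] by (simp add: prod_dividef G_def)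
  qed simp
  finally show ?thesis .
qed

lemma tele: "z \<in> GT n \<Longrightarrow> 1 \<le> i \<Longrightarrow> i + d \<le> Suc n \<Longrightarrow>
   (\<Prod>a<d. G z i (Suc (i + a)) (i + a) / G z i (i + a) (i + a - 1)) = G z i (i + d) (i + d - 1)"
proof (induction d)
  case 0
  then show ?case by simp
next
  case (Suc d)
  have nz: "G z i (i + d) (i + d - 1) \<noteq> 0"
    using Suc.prems by (intro G_nz) auto
  show ?case using Suc nz by simp
qed

lemma minor_A: "z \<in> GT n \<Longrightarrow> 1 \<le> i \<Longrightarrow> i \<le> Suc r \<Longrightarrow> r \<le> n \<Longrightarrow>
   minor (PP n z 1 n) i r = G z i (Suc r) r"
proof -
  assume as: "z \<in> GT n" "1 \<le> i" "i \<le> Suc r" "r \<le> n"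
  show ?thesis
  proof (cases "i = Suc r")
    case True
    then show ?thesis by (simp add: minor_def)
  next
    case False
    then have ir: "i \<le> r" using as by simp
    have "minor (PP n z 1 n) i r = (\<Prod>a<Suc r - i. PP n z i n $$ (i - 1 + a, i - 1 + a))"
      using as ir by (intro minor_PP) auto
    also have "\<dots> = (\<Prod>a<Suc r - i. G z i (Suc (i + a)) (i + a) / G z i (i + a) (i + a - 1))"
    proof (rule prod.cong)
      fix a assume "a \<in> {..<Suc r - i}"
      then show "PP n z i n $$ (i - 1 + a, i - 1 + a) = G z i (Suc (i + a)) (i + a) / G z i (i + a) (i + a - 1)"
        using diag_PP[of i "i + a" n z] as by simp
    qed simp
    also have "\<dots> = G z i (Suc r) r"
      using tele[OF as(1,2), of "Suc r - i"] as ir by simp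
    finally show ?thesis .
  qed
qed

definition Pdf :: "(nat \<Rightarrow> nat \<Rightarrow> complex) \<Rightarrow> nat \<Rightarrow> nat \<Rightarrow> complex" where
  "Pdf z j m = (\<Prod>l\<in>{2..m}. diamond z l j)"

definition Kf :: "(nat \<Rightarrow> nat \<Rightarrow> complex) \<Rightarrow> nat \<Rightarrow> nat \<Rightarrow> complex" where
  "Kf z j a = G z 2 (Suc (Suc j)) (Suc j) * G z 1 a (j - 1) / (G z 2 (Suc j) j * G z 1 a j)"

lemma Pd_G: "1 \<le> m \<Longrightarrow> Pdf z j m = G z 1 m j * G z 2 (Suc m) j / (G z 1 m (j - 1) * G z 2 (Suc m) (Suc j))"
proof (induction m)
  case 0
  then show ?case by simp
next
  case (Suc m)
  show ?case
  proof (cases "m = 0")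
    case True
    then show ?thesis by (simp add: Pdf_def G_def)
  next
    case False
    then have m1: "1 \<le> m" by simp
    have "{2..Suc m} = insert (Suc m) {2..m}" using m1 by auto
    then have "Pdf z j (Suc m) = diamond z (Suc m) j * Pdf z j m" by (simp add: Pdf_def)
    also have "\<dots> = z m j * z (Suc m) j / (z m (j - 1) * z (Suc m) (Suc j)) *
       (G z 1 m j * G z 2 (Suc m) j / (G z 1 m (j - 1) * G z 2 (Suc m) (Suc j)))"
      using Suc.IH m1 by (simp add: diamond_def)
    also have "\<dots> = G z 1 (Suc m) j * G z 2 (Suc (Suc m)) j / (G z 1 (Suc m) (j - 1) * G z 2 (Suc (Suc m)) (Suc j))"
      using m1 by (simp add: G_last mult_ac)
    finally show ?thesis .
  qed
qed

lemma Pd_nz: "z \<in> GT n \<Longrightarrow> 1 \<le> m \<Longrightarrow> m \<le> j \<Longrightarrow> j < n \<Longrightarrow> Pdf z j m \<noteq> 0"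
  by (simp add: Pd_G G_nz)

lemma term_K:
  assumes z: "z \<in> GT n" and "1 \<le> a" "a \<le> m" "m \<le> j" "j < n"
  shows "G z (Suc m) (Suc (Suc j)) (Suc j) / G z (Suc m) (Suc j) j * (G z a m j / G z a m (j - 1))
     = Kf z j a * Pdf z j m"
proof -
  have e1: "G z 2 (Suc (Suc j)) (Suc j) = G z 2 (Suc m) (Suc j) * G z (Suc m) (Suc (Suc j)) (Suc j)"
    by (rule G_split[symmetric]) (use assms in auto)
  have e2: "G z 2 (Suc j) j = G z 2 (Suc m) j * G z (Suc m) (Suc j) j"
    by (rule G_split[symmetric]) (use assms in auto)
  have e3: "G z 1 m j = G z 1 a j * G z a m j"
    by (rule G_split[symmetric]) (use assms in auto)
  have e4: "G z 1 m (j - 1) = G z 1 a (j - 1) * G z a m (j - 1)"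
    by (rule G_split[symmetric]) (use assms in auto)
  have nz: "G z 2 (Suc m) (Suc j) \<noteq> 0" "G z 2 (Suc m) j \<noteq> 0" "G z 1 a j \<noteq> 0" "G z 1 a (j - 1) \<noteq> 0"
    "G z (Suc m) (Suc j) j \<noteq> 0" "G z a m (j - 1) \<noteq> 0"
    by (rule G_nz[OF z]; use assms in auto)+
  show ?thesis
    unfolding Kf_def Pd_G[OF order_trans[OF assms(2,3)]] e1 e2 e3 e4
    using nz by (simp add: field_simps)
qed

lemma E_formula:
  assumes z: "z \<in> GT n" and "1 \<le> a" "a \<le> j" "j < n"
  shows "PP n z a n $$ (j, j - 1) = Kf z j a * (\<Sum>m\<in>{a..j}. Pdf z j m)"
  unfolding sub_PP[OF assms(2) order_trans[OF assms(2,3)] assms(4)] sum_distrib_left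
proof (rule sum.cong)
  fix m assume "m \<in> {a..j}"
  then show "G z (Suc m) (Suc (Suc j)) (Suc j) / G z (Suc m) (Suc j) j * (G z a m j / G z a m (j - 1)) =
         Kf z j a * Pdf z j m"
    using assms by (intro term_K[OF z]) auto
qed simp

lemma Cc_split: "1 \<le> i \<Longrightarrow> Cc c z i j = (\<Sum>k\<in>{1..j}. Pdf z j k) + (c - 1) * (\<Sum>k\<in>{i..j}. Pdf z j k)"
proof -
  assume i: "1 \<le> i"
  have "Cc c z i j = (\<Sum>k\<in>{1..j}. Pdf z j k + (if i \<le> k then (c - 1) * Pdf z j k else 0))"
    unfolding Cc_def Pdf_def by (rule sum.cong) (auto simp: algebra_simps)
  also have "\<dots> = (\<Sum>k\<in>{1..j}. Pdf z j k) + (\<Sum>k\<in>{1..j}. (if i \<le> k then (c - 1) * Pdf z j k else 0))"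
    by (simp add: sum.distrib)
  also have "(\<Sum>k\<in>{1..j}. (if i \<le> k then (c - 1) * Pdf z j k else 0)) = (\<Sum>k\<in>{k\<in>{1..j}. i \<le> k}. (c - 1) * Pdf z j k)"
    by (rule sum.inter_filter[symmetric]) simp
  also have "{k\<in>{1..j}. i \<le> k} = {i..j}" using i by auto
  finally show ?thesis by (simp add: sum_distrib_left)
qed

lemma gMax_eps: "1 \<le> j \<Longrightarrow> gMax (\<lambda>k. \<Prod>i=2..k. inverse (diamond z i j)) {1..j} = inverse (\<Sum>k\<in>{1..j}. Pdf z j k)"
  unfolding gMax_def Pdf_def by (simp add: prod_inversef[unfolded comp_def])

lemma gMax_phi:
  assumes z: "z \<in> GT n" and j: "1 \<le> j" "j < n"
  shows "gMax (\<lambda>k. \<Prod>i=k+1..j. diamond z i j) {1..j} = Pdf z j j / (\<Sum>k\<in>{1..j}. Pdf z j k)"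
proof -
  have split: "(\<Prod>i=k+1..j. diamond z i j) = Pdf z j j / Pdf z j k" if k: "k \<in> {1..j}" for k
  proof -
    have "{2..j} = {2..k} \<union> {k+1..j}" "{2..k} \<inter> {k+1..j} = {}" using k by auto
    then have "Pdf z j j = Pdf z j k * (\<Prod>i=k+1..j. diamond z i j)"
      unfolding Pdf_def by (simp add: prod.union_disjoint)
    then show ?thesis using Pd_nz[OF z, of k j] k j by simp
  qed
  have "(\<Sum>k\<in>{1..j}. inverse (\<Prod>i=k+1..j. diamond z i j)) = (\<Sum>k\<in>{1..j}. Pdf z j k / Pdf z j j)"
  proof (rule sum.cong)
    fix k assume k: "k \<in> {1..j}"
    show "inverse (\<Prod>i=k+1..j. diamond z i j) = Pdf z j k / Pdf z j j"
      unfolding split[OF k] by simp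
  qed simp
  also have "\<dots> = (\<Sum>k\<in>{1..j}. Pdf z j k) / Pdf z j j"
    by (simp add: sum_divide_distrib)
  finally show ?thesis unfolding gMax_def using j by simp
qed

lemma diagprod: "z \<in> GT n \<Longrightarrow> 1 \<le> i \<Longrightarrow> i + d \<le> Suc n \<Longrightarrow>
   (\<Prod>t<d. PP n z i n $$ (i - 1 + t, i - 1 + t)) = G z i (i + d) (i + d - 1)"
proof -
  assume as: "z \<in> GT n" "1 \<le> i" "i + d \<le> Suc n"
  have "(\<Prod>t<d. PP n z i n $$ (i - 1 + t, i - 1 + t)) = (\<Prod>t<d. G z i (Suc (i + t)) (i + t) / G z i (i + t) (i + t - 1))"
  proof (rule prod.cong)
    fix t assume "t \<in> {..<d}"
    then show "PP n z i n $$ (i - 1 + t, i - 1 + t) = G z i (Suc (i + t)) (i + t) / G z i (i + t) (i + t - 1)"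
      using diag_PP[of i "i + t" n z] as by simp
  qed simp
  also have "\<dots> = G z i (i + d) (i + d - 1)" by (rule tele[OF as])
  finally show ?thesis .
qed

lemma minor_emat:
  assumes "1 \<le> i" "i \<le> Suc r" "r \<le> n"
  shows "minor (emat n c j z) i r = minor (xmat n j ((c - 1) * phibar n z j) * PP n z 1 n) i r"
proof -
  have M: "xmat n j ((c - 1) * phibar n z j) * PP n z 1 n \<in> carrier_mat n n"
    by (rule mult_carrier_mat[OF x_carrier PP_carrier])
  have "minor (emat n c j z) i r = gm (xmat n j ((c - 1) * phibar n z j) * PP n z 1 n * xmat n j ((inverse c - 1) * epsbar n z j)) (\<lambda>a. i - 1 + a) 0 (Suc r - i)"
    unfolding minor_gm emat_def Phi_def Phi_aux_PP by simp
  also have "\<dots> = gm (xmat n j ((c - 1) * phibar n z j) * PP n z 1 n) (\<lambda>a. i - 1 + a) 0 (Suc r - i)"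
    by (rule gm_xright[OF M]) (use assms in auto)
  finally show ?thesis by (simp add: minor_gm)
qed

theorem lemma3p10:
  fixes n :: nat and z :: "nat \<Rightarrow> nat \<Rightarrow> complex"
  assumes "z \<in> GT n"
  shows "(\<forall>k\<in>{1..n}. gammabar n z k = (\<Prod>i=1..k. z i k) / (\<Prod>i=1..k-1. z i (k - 1)))
    \<and> (\<forall>j\<in>{1..n-1}. Ent (Phi n z) (Suc j) j \<noteq> 0 \<longrightarrow>
         epsbar n z j = z 1 (Suc j) / z 1 j * gMax (\<lambda>k. \<Prod>i=2..k. inverse (diamond z i j)) {1..j}
       \<and> phibar n z j = z j j / z (Suc j) (Suc j) * gMax (\<lambda>k. \<Prod>i=k+1..j. diamond z i j) {1..j}
       \<and> (\<forall>c. c \<noteq> 0 \<longrightarrow>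
            (\<forall>i r. 1 \<le> i \<and> i \<le> r \<and> r \<le> n \<longrightarrow> minor (emat n c j z) i r \<noteq> 0) \<longrightarrow>
            (\<forall>i r. 1 \<le> i \<and> i \<le> r \<and> r \<le> n \<longrightarrow>
               ebar n c j z i r = (if r = j then z i j * Cc c z i j / Cc c z (Suc i) j else z i r))))"
proof -
  have z: "z \<in> GT n" by (rule assms)
  have zn: "z a b \<noteq> 0" if "1 \<le> a" "a \<le> b" "b \<le> n" for a b
    using z that unfolding GT_def by auto
  have A: "Phi n z = PP n z 1 n" by (simp add: Phi_def Phi_aux_PP)
  have P1: "\<forall>k\<in>{1..n}. gammabar n z k = (\<Prod>i=1..k. z i k) / (\<Prod>i=1..k-1. z i (k - 1))"
  proof
    fix k assume k: "k \<in> {1..n}"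
    have "gammabar n z k = G z 1 (Suc k) k / G z 1 k (k - 1)"
      unfolding gammabar_def Ent_def A using diag_PP[of 1 k n z] k by simp
    moreover have "G z 1 (Suc k) k = (\<Prod>i=1..k. z i k)"
      by (simp add: G_def atLeastLessThanSuc_atLeastAtMost)
    moreover have "G z 1 k (k - 1) = (\<Prod>i=1..k-1. z i (k - 1))"
      unfolding G_def using k by (intro prod.cong) auto
    ultimately show "gammabar n z k = (\<Prod>i=1..k. z i k) / (\<Prod>i=1..k-1. z i (k - 1))" by simp
  qed
  have P2: "\<forall>j\<in>{1..n-1}. Ent (Phi n z) (Suc j) j \<noteq> 0 \<longrightarrow>
         epsbar n z j = z 1 (Suc j) / z 1 j * gMax (\<lambda>k. \<Prod>i=2..k. inverse (diamond z i j)) {1..j}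
       \<and> phibar n z j = z j j / z (Suc j) (Suc j) * gMax (\<lambda>k. \<Prod>i=k+1..j. diamond z i j) {1..j}
       \<and> (\<forall>c. c \<noteq> 0 \<longrightarrow>
            (\<forall>i r. 1 \<le> i \<and> i \<le> r \<and> r \<le> n \<longrightarrow> minor (emat n c j z) i r \<noteq> 0) \<longrightarrow>
            (\<forall>i r. 1 \<le> i \<and> i \<le> r \<and> r \<le> n \<longrightarrow>
               ebar n c j z i r = (if r = j then z i j * Cc c z i j / Cc c z (Suc i) j else z i r)))"
  proof (intro ballI impI)
    fix j assume j: "j \<in> {1..n-1}" and E0: "Ent (Phi n z) (Suc j) j \<noteq> 0"
    have j1: "1 \<le> j" and jn: "j < n" using j by auto
    define C where "C = (\<Sum>k\<in>{1..j}. Pdf z j k)"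
    have E1: "Ent (Phi n z) (Suc j) j = Kf z j 1 * C"
      unfolding Ent_def A C_def using E_formula[OF z order_refl j1 jn] by simp
    have Cnz: "C \<noteq> 0" using E0 E1 by auto
    have D1: "Ent (Phi n z) (Suc j) (Suc j) = G z 1 (Suc (Suc j)) (Suc j) / G z 1 (Suc j) j"
      unfolding Ent_def A using diag_PP[of 1 "Suc j" n z] jn by simp
    have D0: "Ent (Phi n z) j j = G z 1 (Suc j) j / G z 1 j (j - 1)"
      unfolding Ent_def A using diag_PP[of 1 j n z] j1 jn by simp
    have g1: "G z 2 (Suc (Suc j)) (Suc j) \<noteq> 0" by (rule G_nz[OF z]) (use jn in auto)
    have g2: "G z 2 (Suc j) j \<noteq> 0" by (rule G_nz[OF z]) (use jn in auto)
    have g3: "G z 1 j (j - 1) \<noteq> 0" by (rule G_nz[OF z]) (use jn j1 in auto)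
    have g4: "G z 2 (Suc j) (Suc j) \<noteq> 0" by (rule G_nz[OF z]) (use jn in auto)
    have g5: "G z 1 j j \<noteq> 0" by (rule G_nz[OF z]) (use jn in auto)
    have z1: "z 1 j \<noteq> 0" "z j j \<noteq> 0" "z (Suc j) (Suc j) \<noteq> 0" "z 1 (Suc j) \<noteq> 0"
      using zn j1 jn by auto
    have K1: "Kf z j 1 = G z 2 (Suc (Suc j)) (Suc j) / G z 2 (Suc j) j"
      unfolding Kf_def by simp
    have s1: "G z 1 (Suc (Suc j)) (Suc j) = z 1 (Suc j) * G z 2 (Suc (Suc j)) (Suc j)"
      using G_first[of 1 "Suc (Suc j)" z "Suc j"] by (simp add: numeral_2_eq_2)
    have s1b: "G z 1 (Suc j) j = z 1 j * G z 2 (Suc j) j"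
      using G_first[of 1 "Suc j" z j] j1 by (simp add: numeral_2_eq_2)
    have s2: "G z 1 (Suc j) j = G z 1 j j * z j j"
      using G_last[of 1 j z j] j1 by simp
    have s3: "G z 2 (Suc (Suc j)) (Suc j) = G z 2 (Suc j) (Suc j) * z (Suc j) (Suc j)"
      using G_last[of 2 "Suc j" z "Suc j"] j1 by simp
    have eps: "epsbar n z j = z 1 (Suc j) / z 1 j * gMax (\<lambda>k. \<Prod>i=2..k. inverse (diamond z i j)) {1..j}"
      unfolding epsbar_def D1 E1 K1 gMax_eps[OF j1] C_def[symmetric] s1 s1b
      using g1 g2 Cnz z1 by (simp add: field_simps)
    have phiv: "phibar n z j = G z 1 (Suc j) j / G z 1 j (j - 1) / (Kf z j 1 * C)"
      unfolding phibar_def D0 E1 by simp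
    have phi: "phibar n z j = z j j / z (Suc j) (Suc j) * gMax (\<lambda>k. \<Prod>i=k+1..j. diamond z i j) {1..j}"
      unfolding phiv gMax_phi[OF z j1 jn] C_def[symmetric] K1 Pd_G[OF j1] s2 s3
      using g1 g2 g3 g4 g5 Cnz z1 by (simp add: field_simps)
    show "epsbar n z j = z 1 (Suc j) / z 1 j * gMax (\<lambda>k. \<Prod>i=2..k. inverse (diamond z i j)) {1..j}
       \<and> phibar n z j = z j j / z (Suc j) (Suc j) * gMax (\<lambda>k. \<Prod>i=k+1..j. diamond z i j) {1..j}
       \<and> (\<forall>c. c \<noteq> 0 \<longrightarrow>
            (\<forall>i r. 1 \<le> i \<and> i \<le> r \<and> r \<le> n \<longrightarrow> minor (emat n c j z) i r \<noteq> 0) \<longrightarrow>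
            (\<forall>i r. 1 \<le> i \<and> i \<le> r \<and> r \<le> n \<longrightarrow>
               ebar n c j z i r = (if r = j then z i j * Cc c z i j / Cc c z (Suc i) j else z i r)))"
    proof (intro conjI allI impI)
      show "epsbar n z j = z 1 (Suc j) / z 1 j * gMax (\<lambda>k. \<Prod>i=2..k. inverse (diamond z i j)) {1..j}"
        by (rule eps)
      show "phibar n z j = z j j / z (Suc j) (Suc j) * gMax (\<lambda>k. \<Prod>i=k+1..j. diamond z i j) {1..j}"
        by (rule phi)
      fix c :: complex and i r :: nat assume c0: "c \<noteq> 0" and ir: "1 \<le> i \<and> i \<le> r \<and> r \<le> n"
      define a where "a = (c - 1) * phibar n z j"
      let ?X = "xmat n j a * PP n z 1 n"
      have ME: "minor (emat n c j z) i' r = minor ?X i' r" if "1 \<le> i'" "i' \<le> Suc r" for i'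
        using minor_emat[OF that, of n c j z] ir a_def by simp
      show "ebar n c j z i r = (if r = j then z i j * Cc c z i j / Cc c z (Suc i) j else z i r)"
      proof (cases "r = j")
        case False
        have MX: "minor ?X i' r = G z i' (Suc r) r" if "1 \<le> i'" "i' \<le> Suc r" for i'
        proof -
          have "minor ?X i' r = minor (PP n z 1 n) i' r"
          proof (cases "r < j \<or> j < i'")
            case True
            then show ?thesis by (intro minor_xleft_eq) (use that ir in auto)
          next
            case False2: False
            then have "i' \<le> j" "j < r" using \<open>r \<noteq> j\<close> by auto
            then show ?thesis by (intro minor_xleft_both) (use that ir in auto)
          qed
          also have "\<dots> = G z i' (Suc r) r" by (rule minor_A[OF z]) (use that ir in auto)
          finally show ?thesis .
        qed
        have "ebar n c j z i r = G z i (Suc r) r / G z (Suc i) (Suc r) r"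
          unfolding ebar_def Psi_def using ME MX ir by simp
        also have "\<dots> = z i r"
          using G_first[of i "Suc r" z r] G_nz[OF z, of "Suc i" "Suc r" r] ir by simp
        finally show ?thesis using False by simp
      next
        case True
        have MJ: "minor ?X i' j = G z i' (Suc j) j * Cc c z i' j / C" if "1 \<le> i'" "i' \<le> Suc j" for i'
        proof (cases "i' = Suc j")
          case True
          have "Cc c z (Suc j) j = C" using Cc_split[of "Suc j" c z j] by (simp add: C_def)
          then show ?thesis using True Cnz by (simp add: minor_def)
        next
          case False
          then have ij: "i' \<le> j" using that by simp
          have "minor ?X i' j = minor (PP n z 1 n) i' j + a * gm (PP n z 1 n) (\<lambda>t. if t < j - i' then i' - 1 + t else j) 0 (Suc j - i')"
            by (rule minor_xleft_last[OF PP_carrier]) (use that ij jn in auto)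
          also have "minor (PP n z 1 n) i' j = G z i' (Suc j) j" by (rule minor_A[OF z]) (use that ij jn in auto)
          also have "gm (PP n z 1 n) (\<lambda>t. if t < j - i' then i' - 1 + t else j) 0 (Suc j - i')
              = G z i' j (j - 1) * (Kf z j i' * (\<Sum>m\<in>{i'..j}. Pdf z j m))"
          proof -
            have "gm (PP n z 1 n) (\<lambda>t. if t < j - i' then i' - 1 + t else j) 0 (Suc j - i')
               = (\<Prod>t<j - i'. PP n z i' n $$ (i' - 1 + t, i' - 1 + t)) * PP n z i' n $$ (j, j - 1)"
              by (rule minor2_PP) (use that ij jn in auto)
            also have "(\<Prod>t<j - i'. PP n z i' n $$ (i' - 1 + t, i' - 1 + t)) = G z i' j (j - 1)"
              using diagprod[OF z that(1), of "j - i'"] ij jn by simp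
            also have "PP n z i' n $$ (j, j - 1) = Kf z j i' * (\<Sum>m\<in>{i'..j}. Pdf z j m)"
              by (rule E_formula[OF z that(1) ij jn])
            finally show ?thesis .
          qed
          finally have M1: "minor ?X i' j = G z i' (Suc j) j + a * (G z i' j (j - 1) * (Kf z j i' * (\<Sum>m\<in>{i'..j}. Pdf z j m)))" .
          have sp1: "G z 1 j (j - 1) = G z 1 i' (j - 1) * G z i' j (j - 1)"
            by (rule G_split[symmetric]) (use that ij in auto)
          have sp2: "G z 1 (Suc j) j = G z 1 i' j * G z i' (Suc j) j"
            by (rule G_split[symmetric]) (use that ij in auto)
          have n1: "G z 1 i' (j - 1) \<noteq> 0" by (rule G_nz[OF z]) (use that ij jn in auto)
          have n2: "G z i' j (j - 1) \<noteq> 0" by (rule G_nz[OF z]) (use that ij jn in auto)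
          have n3: "G z 1 i' j \<noteq> 0" by (rule G_nz[OF z]) (use that ij jn in auto)
          have "G z i' (Suc j) j + a * (G z i' j (j - 1) * (Kf z j i' * (\<Sum>m\<in>{i'..j}. Pdf z j m)))
              = G z i' (Suc j) j * Cc c z i' j / C"
            unfolding a_def phiv Cc_split[OF that(1)] C_def[symmetric] Kf_def sp1 sp2
            using n1 n2 n3 g1 g2 Cnz by (simp add: field_simps)
          then show ?thesis using M1 by simp
        qed
        have "ebar n c j z i r = minor ?X i j / minor ?X (Suc i) j"
          unfolding ebar_def Psi_def using ME ir True by simp
        also have "\<dots> = z i j * Cc c z i j / Cc c z (Suc i) j"
        proof (cases "Cc c z (Suc i) j = 0")
          case True
          then show ?thesis using MJ[of "Suc i"] ir \<open>r = j\<close> by simp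
        next
          case False
          have m1: "minor ?X i j = G z i (Suc j) j * Cc c z i j / C" using MJ[of i] ir \<open>r = j\<close> by simp
          have m2: "minor ?X (Suc i) j = G z (Suc i) (Suc j) j * Cc c z (Suc i) j / C" using MJ[of "Suc i"] ir \<open>r = j\<close> by simp
          have gf: "G z i (Suc j) j = z i j * G z (Suc i) (Suc j) j" using G_first[of i "Suc j" z j] ir \<open>r = j\<close> by simp
          have gn: "G z (Suc i) (Suc j) j \<noteq> 0" using G_nz[OF z, of "Suc i" "Suc j" j] ir \<open>r = j\<close> by simp
          show ?thesis
            unfolding m1 m2 gf using False gn Cnz by (simp add: field_simps)
        qed
        finally show ?thesis using True by simp
      qed
    qed
  qed
  show ?thesis using P1 P2 by blast
qed
end
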